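(* Let $k\ge1$ and $S_a,S_b\in\{0,1\}^{k^2}$. Let $G$ be the directed unweighted graph on vertices $\ell_i,\ell_i',r_i,r_i'$ ($1\le i\le k$) with edges $(\ell_i,r_i)$ and $(r_i',\ell_i')$ for each $i$, the edge $(\ell_j',\ell_i)$ whenever $S_a[(i-1)k+j]=1$, and the edge $(r_i,r_j')$ whenever $S_b[(i-1)k+j]=1$. If there is an index $m$ with $S_a[m]=S_b[m]=1$, then $G$ contains a directed cycle of length $4$; otherwise every directed cycle of $G$ has length at least $8$.
   Context: For a bit string $S$, $S[m]$ denotes its $m$-th bit. *)

theory Defs
  imports Main
begin

datatype vert = L nat | L' nat | R nat | R' nat

text \<open>Bit strings S in {0,1}^n are lists of booleans of length n; the m-th bit
 (1-indexed, 1 <= m <= n) is S ! (m - 1).\<close>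
definition bit :: "bool list \<Rightarrow> nat \<Rightarrow> bool" where
  "bit S m = S ! (m - 1)"

definition vertices :: "nat \<Rightarrow> vert set" where
  "vertices k = {v. \<exists>i\<in>{1..k}. v = L i \<or> v = L' i \<or> v = R i \<or> v = R' i}"

definition edge :: "nat \<Rightarrow> bool list \<Rightarrow> bool list \<Rightarrow> vert \<Rightarrow> vert \<Rightarrow> bool" where
  "edge k Sa Sb u v \<longleftrightarrow>
     (\<exists>i\<in>{1..k}. u = L i \<and> v = R i) \<or>
     (\<exists>i\<in>{1..k}. u = R' i \<and> v = L' i) \<or>
     (\<exists>i\<in>{1..k}. \<exists>j\<in>{1..k}. u = L' j \<and> v = L i \<and> bit Sa ((i - 1) * k + j)) \<or>
     (\<exists>i\<in>{1..k}. \<exists>j\<in>{1..k}. u = R i \<and> v = R' j \<and> bit Sb ((i - 1) * k + j))"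

definition is_cycle :: "(vert \<Rightarrow> vert \<Rightarrow> bool) \<Rightarrow> vert list \<Rightarrow> bool" where
  "is_cycle E vs \<longleftrightarrow> vs \<noteq> [] \<and> distinct vs \<and>
     (\<forall>t < length vs. E (vs ! t) (vs ! ((t + 1) mod length vs)))"

end

theory Submission
  imports Defs
begin

fun tp :: "vert \<Rightarrow> nat" where
  "tp (L _) = 0" | "tp (R _) = 1" | "tp (R' _) = 2" | "tp (L' _) = 3"

lemma tp_lt: "tp v < 4" by (cases v) auto

lemma edge_tp: "edge k Sa Sb u v \<Longrightarrow> tp v = (tp u + 1) mod 4"
  unfolding edge_def by auto

lemma cyc_tp:
  assumes "is_cycle (edge k Sa Sb) vs"
  shows "t < length vs \<Longrightarrow> tp (vs ! t) = (tp (vs ! 0) + t) mod 4"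
proof (induction t)
  case 0 then show ?case using tp_lt by simp
next
  case (Suc t)
  have "\<forall>t<length vs. edge k Sa Sb (vs ! t) (vs ! ((t + 1) mod length vs))"
    using assms unfolding is_cycle_def by blast
  then have "edge k Sa Sb (vs ! t) (vs ! ((t+1) mod length vs))"
    using Suc.prems by (meson Suc_lessD)
  moreover have "(t+1) mod length vs = Suc t" using Suc.prems by simp
  ultimately have "edge k Sa Sb (vs ! t) (vs ! Suc t)" by simp
  then have h1: "tp (vs ! Suc t) = (tp (vs ! t) + 1) mod 4" by (rule edge_tp)
  have h2: "tp (vs ! t) = (tp (vs ! 0) + t) mod 4" using Suc by simp
  show ?case unfolding h1 h2 by (simp add: mod_Suc_eq)
qed

lemma mod4aux: "(a::nat) = (a+n) mod 4 \<Longrightarrow> a < 4 \<Longrightarrow> n mod 4 = 0" by presburger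

lemma cyc_mod4:
  assumes "is_cycle (edge k Sa Sb) vs"
  shows "length vs mod 4 = 0"
proof -
  define n where "n = length vs"
  have n0: "n > 0" using assms unfolding is_cycle_def n_def by auto
  have "\<forall>t<length vs. edge k Sa Sb (vs ! t) (vs ! ((t + 1) mod length vs))"
    using assms unfolding is_cycle_def by blast
  then have "edge k Sa Sb (vs ! (n-1)) (vs ! (((n-1)+1) mod n))"
    using n0 unfolding n_def by (meson diff_less zero_less_one)
  then have "tp (vs ! 0) = (tp (vs ! (n-1)) + 1) mod 4" using n0 edge_tp by simp
  also have "tp (vs ! (n-1)) = (tp (vs ! 0) + (n-1)) mod 4"
    using cyc_tp[OF assms, of "n-1"] n0 n_def by (metis diff_less zero_less_one)
  finally have "tp (vs ! 0) = ((tp (vs ! 0) + (n-1)) mod 4 + 1) mod 4" .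
  also have "\<dots> = (tp (vs ! 0) + (n-1) + 1) mod 4" by (simp add: mod_Suc_eq)
  also have "\<dots> = (tp (vs ! 0) + n) mod 4" using n0 by simp
  finally have "tp (vs ! 0) = (tp (vs ! 0) + n) mod 4" .
  then have "n mod 4 = 0" using tp_lt[of "vs ! 0"] by (rule_tac mod4aux)
  then show ?thesis unfolding n_def .
qed

lemma eL: "edge k Sa Sb (L i) v \<Longrightarrow> v = R i" unfolding edge_def by auto
lemma eR': "edge k Sa Sb (R' i) v \<Longrightarrow> v = L' i" unfolding edge_def by auto
lemma eR: "edge k Sa Sb (R i) v \<Longrightarrow> \<exists>j. v = R' j" unfolding edge_def by auto
lemma eL': "edge k Sa Sb (L' j) v \<Longrightarrow> \<exists>i. v = L i" unfolding edge_def by auto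
lemma eR2: "edge k Sa Sb (R i) (R' j) \<Longrightarrow> i \<in> {1..k} \<and> j \<in> {1..k} \<and> bit Sb ((i-1)*k+j)" unfolding edge_def by auto
lemma eL'2: "edge k Sa Sb (L' j) (L i) \<Longrightarrow> i \<in> {1..k} \<and> j \<in> {1..k} \<and> bit Sa ((i-1)*k+j)" unfolding edge_def by auto
lemma fourL: "edge k Sa Sb (L i) b \<Longrightarrow> edge k Sa Sb b c \<Longrightarrow> edge k Sa Sb c d \<Longrightarrow> edge k Sa Sb d (L i) \<Longrightarrow>
  \<exists>i\<in>{1..k}. \<exists>j\<in>{1..k}. bit Sa ((i-1)*k+j) \<and> bit Sb ((i-1)*k+j)"
proof -
  assume e0: "edge k Sa Sb (L i) b" and e1: "edge k Sa Sb b c" and e2: "edge k Sa Sb c d" and e3: "edge k Sa Sb d (L i)"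
  have b: "b = R i" using eL[OF e0] .
  obtain j where j: "c = R' j" using eR e1 b by blast
  have d: "d = L' j" using eR' e2 j by blast
  have "i \<in> {1..k} \<and> j \<in> {1..k} \<and> bit Sb ((i-1)*k+j)" using eR2 e1 b j by blast
  moreover have "bit Sa ((i-1)*k+j)" using eL'2 e3 d by blast
  ultimately show ?thesis by blast
qed
lemma four: assumes e: "edge k Sa Sb a b" "edge k Sa Sb b c" "edge k Sa Sb c d" "edge k Sa Sb d a"
  shows "\<exists>i\<in>{1..k}. \<exists>j\<in>{1..k}. bit Sa ((i-1)*k+j) \<and> bit Sb ((i-1)*k+j)"
proof (cases a)
  case (L i) then show ?thesis using fourL e by blast
next
  case (R i) 
  obtain j where "b = R' j" using eR e R by blast
  then have "c = L' j" using eR' e by blast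
  then obtain i' where "d = L i'" using eL' e by blast
  then show ?thesis using fourL[of k Sa Sb i' a b c] e by blast
next
  case (R' j) 
  have "b = L' j" using eR' e R' by blast
  then obtain i' where "c = L i'" using eL' e by blast
  then show ?thesis using fourL[of k Sa Sb i' d a b] e by blast
next
  case (L' j) 
  obtain i' where "b = L i'" using eL' e L' by blast
  then show ?thesis using fourL[of k Sa Sb i' c d a] e by blast
qed
lemma no4:
  assumes c: "is_cycle (edge k Sa Sb) vs" and l: "length vs = 4"
    and nb: "\<not> (\<exists>m\<in>{1..k^2}. bit Sa m \<and> bit Sb m)"
  shows False
proof -
  have E: "\<forall>t<length vs. edge k Sa Sb (vs ! t) (vs ! ((t + 1) mod length vs))"
    using c unfolding is_cycle_def by blast
  obtain a b c d where vs: "vs = [a,b,c,d]" using l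
    by (auto simp: length_Suc_conv numeral_eq_Suc)
  have E': "\<And>t. t < 4 \<Longrightarrow> edge k Sa Sb ([a,b,c,d] ! t) ([a,b,c,d] ! ((t + 1) mod 4))"
    using E vs by simp
  have e0: "edge k Sa Sb a b" using E'[of 0] by simp
  have e1: "edge k Sa Sb b c" using E'[of 1] by simp
  have e2: "edge k Sa Sb c d" using E'[of 2] by simp
  have e3: "edge k Sa Sb d a" using E'[of 3] by simp
  obtain i j where i: "i \<in> {1..k}" and j: "j \<in> {1..k}" and a: "bit Sa ((i-1)*k+j)" and b: "bit Sb ((i-1)*k+j)"
    using four[OF e0 e1 e2 e3] by blast
  have "(i-1)*k \<le> (k-1)*k" using i by (intro mult_le_mono1) auto
  moreover have "j \<le> k" using j by simp
  ultimately have "(i-1)*k+j \<le> (k-1)*k + k" by linarith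
  moreover have "(k-1)*k + k = k^2" by (cases k) (auto simp: power2_eq_square)
  ultimately have "(i-1)*k+j \<le> k^2" by linarith
  then show False using nb a b j by auto
qed

lemma cyc4: assumes "E a b" "E b c" "E c d" "E d a" "distinct [a,b,c,d]"
  shows "is_cycle E [a,b,c,d]"
  unfolding is_cycle_def
proof (intro conjI allI impI)
  fix t assume "t < length [a,b,c,d]"
  then have "t = 0 \<or> t = 1 \<or> t = 2 \<or> t = 3" by auto
  then show "E ([a,b,c,d] ! t) ([a,b,c,d] ! ((t + 1) mod length [a,b,c,d]))"
    using assms by (elim disjE) simp_all
qed (use assms in auto)
theorem mainTheorem6:
  fixes k :: nat and Sa Sb :: "bool list"
  assumes "k \<ge> 1" and "length Sa = k ^ 2" and "length Sb = k ^ 2"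
  shows "((\<exists>m\<in>{1..k^2}. bit Sa m \<and> bit Sb m) \<longrightarrow>
            (\<exists>vs. is_cycle (edge k Sa Sb) vs \<and> length vs = 4))
       \<and> ((\<not> (\<exists>m\<in>{1..k^2}. bit Sa m \<and> bit Sb m)) \<longrightarrow>
            (\<forall>vs. is_cycle (edge k Sa Sb) vs \<longrightarrow> length vs \<ge> 8))"
proof (intro conjI impI allI)
  assume "\<exists>m\<in>{1..k^2}. bit Sa m \<and> bit Sb m"
  then obtain m where m: "m \<in> {1..k^2}" "bit Sa m" "bit Sb m" by blast
  define i where "i = (m-1) div k + 1"
  define j where "j = (m-1) mod k + 1"
  have k0: "k > 0" using assms by simp
  have mij: "(i-1)*k + j = m" using m(1) unfolding i_def j_def
    by simp
  have "m - 1 < k * k" using m(1) by (auto simp: power2_eq_square)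
  then have "(m-1) div k < k" using k0 by (metis div_less_iff_less_mult)
  then have i: "i \<in> {1..k}" unfolding i_def by auto
  have j: "j \<in> {1..k}" unfolding j_def using k0 by (auto simp: Suc_le_eq)
  let ?vs = "[L i, R i, R' j, L' j]"
  have e0: "edge k Sa Sb (L i) (R i)" using i unfolding edge_def by blast
  have e1: "edge k Sa Sb (R i) (R' j)" using i j m(3) mij unfolding edge_def by blast
  have e2: "edge k Sa Sb (R' j) (L' j)" using j unfolding edge_def by blast
  have e3: "edge k Sa Sb (L' j) (L i)" using i j m(2) mij unfolding edge_def by blast
  have "is_cycle (edge k Sa Sb) ?vs" by (rule cyc4[OF e0 e1 e2 e3]) simp
  then show "\<exists>vs. is_cycle (edge k Sa Sb) vs \<and> length vs = 4" by (intro exI[of _ ?vs]) simp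
next
  fix vs
  assume nb: "\<not> (\<exists>m\<in>{1..k^2}. bit Sa m \<and> bit Sb m)" and c: "is_cycle (edge k Sa Sb) vs"
  have "length vs mod 4 = 0" using cyc_mod4[OF c] .
  moreover have "length vs > 0" using c unfolding is_cycle_def by auto
  moreover have "length vs \<noteq> 4" using no4[OF c _ nb] by auto
  ultimately show "length vs \<ge> 8" by presburger
qed

end
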